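(* In any execution of $\mathcal{U}$, for every operation $o$, there is at most one execution of line 12 for $o$ that returns true. Equivalently: if line 12 is executed for $o$ and returns true at some time $T$, then every execution of line 12 for $o$ after time $T$ returns false.
   Context: Model: an asynchronous shared-memory system with possibly infinitely many processes, any of which may crash, communicating via atomic shared objects. A fetch-and-increment (F\&I) object stores an integer; F\&I$(C)$ atomically returns the current value and increments it. A generalized-compare-and-swap (GCAS) object $O$ stores a value and supports Read$(O)$ and GCAS$(c, O, v_1, v_2)$, which atomically does: if $c(\text{current value of } O, v_1)$ holds then set $O := v_2$ and return true, else return false. Tuples are compared componentwise for $=$; GCAS$(>, A, (t,-,-), v)$ succeeds iff the time field of $A$ is strictly greater than $t$. Implemented type $\mathcal{T} = (OP, RES, Q, \delta)$ with initial state $s_0$; a procedure $apply_{\mathcal{T}}(o,s)$ returns some $(s',r)$ with $(s,o,s',r)\in\delta$. $NULL$ is a value different from every response of $\mathcal{T}$, and $NOOP$ is a name different from every operation of $\mathcal{T}$. Algorithm $\mathcal{U}$: each process $p$ owns a GCAS object $H_p$ with fields $(time, response)$. Shared objects: F\&I object $C$, initially $1$; GCAS object $A$ with fields $(time, op, ptr)$, initially $(0, NOOP, h(NOOP))$, where $h(NOOP)$ is a pointer to an immutable location containing $(0,\perp)$; GCAS object $S$ with fields $(time, state, response, ptr)$, initially $(0, s_0, \perp, h(NOOP))$. Process $p$ performs operation $o$ by calling DoOp$(o)$: (1) DoOp$(o)$ invoked; (2) $t := $ F\&I$(C)$; (3) $H_p := (t, NULL)$; (4) while $H_p = (t, NULL)$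 do: (5) $(t^*, s^*, r^*, roptr^* ) := S$; (6) GCAS$(=, *roptr^*, (t^*, NULL), (t^*, r^* ))$; (7) GCAS$(>, A, (t,-,-), (t, o, \&H_p))$; (8) $(t', o', roptr') := A$; (9) $(\hat t, \hat r) := *roptr'$; (10) if $(\hat t,\hat r) = (t', NULL)$ then (11) $(s', r') := apply_{\mathcal{T}}(o', s^* )$; (12) GCAS$(=, S, (t^*,s^*,r^*,roptr^* ), (t', s', r', roptr'))$; (13) else GCAS$(=, A, (t', o', roptr'), (t, o, \&H_p))$; end while; (14) return $H_p.response$. Notation: an "operation" $o$ means one invocation of DoOp$(o)$ (or the initial $NOOP$). $p(o)$ is the process executing it; $t(o)$ is the value returned by its F\&I at line 2, or $\infty$ if line 2 has not been executed; $h(o)$ is $H_{p(o)}$. For $NOOP$: $t(NOOP)=0$ and $h(NOOP)$ is the immutable location containing $(0,\perp)$. "Line 12 is executed for $o$" means the new value written in that GCAS has the form $(t(o), -, r, h(o))$. *)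

theory Defs
  imports Main
begin

text \<open>Process identifiers have an arbitrary (possibly
infinite) type 'p. The implemented type T has operations 'op, responses 'r,
states 'q, transition relation delta and initial state s0.\<close>

text \<open>Pointers to H-registers: h(NOOP) (immutable location holding (0,Bot))
or the register H_p of process p.\<close>
datatype 'p ptr = HNoop | HP 'p

datatype 'r rv = NULL | Bot | Res 'r

datatype 'op opn = NOOP | Op 'op

text \<open>Local state of a process; lpc is the number of the next line to execute
(1 = idle, about to invoke DoOp).\<close>
record ('p, 'op, 'q, 'r) lstate =
  lpc :: nat
  lop :: 'op
  lt :: nat
  lts :: nat
  lss :: 'q
  lrs :: "'r rv"
  lps :: "'p ptr"
  lt1 :: nat
  lo1 :: "'op opn"
  lp1 :: "'p ptr"
  lth :: nat
  lrh :: "'r rv"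
  ls1 :: 'q
  lr1 :: 'r

record ('p, 'op, 'q, 'r) config =
  cC :: nat
  cA :: "nat \<times> 'op opn \<times> 'p ptr"
  cS :: "nat \<times> 'q \<times> 'r rv \<times> 'p ptr"
  cH :: "'p \<Rightarrow> nat \<times> 'r rv"
  cL :: "'p \<Rightarrow> ('p, 'op, 'q, 'r) lstate"

definition deref :: "('p \<Rightarrow> nat \<times> 'r rv) \<Rightarrow> 'p ptr \<Rightarrow> nat \<times> 'r rv" where
  "deref H x = (case x of HNoop \<Rightarrow> (0, Bot) | HP q \<Rightarrow> H q)"

definition wr :: "('p \<Rightarrow> nat \<times> 'r rv) \<Rightarrow> 'p ptr \<Rightarrow> nat \<times> 'r rv \<Rightarrow> ('p \<Rightarrow> nat \<times> 'r rv)" where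
  "wr H x v = (case x of HNoop \<Rightarrow> H | HP q \<Rightarrow> H(q := v))"

text \<open>Events labelling atomic steps. EFI p t: process p's F&I at line 2 returned t.
EL12 p v b: process p executed the GCAS of line 12 with new value v, returning b.\<close>
datatype ('p, 'op, 'q, 'r) event =
    EInv 'p 'op
  | EFI 'p nat
  | EL12 'p "nat \<times> 'q \<times> 'r rv \<times> 'p ptr" bool
  | ERet 'p "'r rv"
  | ETau 'p nat

definition setL :: "('p, 'op, 'q, 'r) config \<Rightarrow> 'p \<Rightarrow> ('p, 'op, 'q, 'r) lstate \<Rightarrow> ('p, 'op, 'q, 'r) config" where
  "setL c p l = c\<lparr>cL := (cL c)(p := l)\<rparr>"

text \<open>One atomic step of process p (each numbered line is one atomic step).
applyT is the procedure apply_T.\<close>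
inductive ustep :: "('op \<Rightarrow> 'q \<Rightarrow> 'q \<times> 'r) \<Rightarrow> ('p, 'op, 'q, 'r) config
    \<Rightarrow> ('p, 'op, 'q, 'r) event \<Rightarrow> ('p, 'op, 'q, 'r) config \<Rightarrow> bool"
  for applyT where
  line1: "lpc (cL c p) = 1 \<Longrightarrow>
     ustep applyT c (EInv p o') (setL c p ((cL c p)\<lparr>lpc := 2, lop := o'\<rparr>))"
| line2: "lpc (cL c p) = 2 \<Longrightarrow>
     ustep applyT c (EFI p (cC c))
       ((setL c p ((cL c p)\<lparr>lpc := 3, lt := cC c\<rparr>))\<lparr>cC := Suc (cC c)\<rparr>)"
| line3: "lpc (cL c p) = 3 \<Longrightarrow>
     ustep applyT c (ETau p 3)
       ((setL c p ((cL c p)\<lparr>lpc := 4\<rparr>))\<lparr>cH := (cH c)(p := (lt (cL c p), NULL))\<rparr>)"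
| line4: "lpc (cL c p) = 4 \<Longrightarrow>
     ustep applyT c (ETau p 4)
       (setL c p ((cL c p)\<lparr>lpc := (if cH c p = (lt (cL c p), NULL) then 5 else 14)\<rparr>))"
| line5: "lpc (cL c p) = 5 \<Longrightarrow> cS c = (ts, ss, rs, ps) \<Longrightarrow>
     ustep applyT c (ETau p 5)
       (setL c p ((cL c p)\<lparr>lpc := 6, lts := ts, lss := ss, lrs := rs, lps := ps\<rparr>))"
| line6: "lpc (cL c p) = 6 \<Longrightarrow> l = cL c p \<Longrightarrow>
     ustep applyT c (ETau p 6)
       ((setL c p (l\<lparr>lpc := 7\<rparr>))\<lparr>cH :=
          (if deref (cH c) (lps l) = (lts l, NULL)
           then wr (cH c) (lps l) (lts l, lrs l) else cH c)\<rparr>)"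
| line7: "lpc (cL c p) = 7 \<Longrightarrow> l = cL c p \<Longrightarrow>
     ustep applyT c (ETau p 7)
       ((setL c p (l\<lparr>lpc := 8\<rparr>))\<lparr>cA :=
          (if fst (cA c) > lt l then (lt l, Op (lop l), HP p) else cA c)\<rparr>)"
| line8: "lpc (cL c p) = 8 \<Longrightarrow> cA c = (t1, o1, p1) \<Longrightarrow>
     ustep applyT c (ETau p 8)
       (setL c p ((cL c p)\<lparr>lpc := 9, lt1 := t1, lo1 := o1, lp1 := p1\<rparr>))"
| line9: "lpc (cL c p) = 9 \<Longrightarrow> deref (cH c) (lp1 (cL c p)) = (th, rh) \<Longrightarrow>
     ustep applyT c (ETau p 9)
       (setL c p ((cL c p)\<lparr>lpc := 10, lth := th, lrh := rh\<rparr>))"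
| line10: "lpc (cL c p) = 10 \<Longrightarrow> l = cL c p \<Longrightarrow>
     ustep applyT c (ETau p 10)
       (setL c p (l\<lparr>lpc := (if (lth l, lrh l) = (lt1 l, NULL) then 11 else 13)\<rparr>))"
| line11: "lpc (cL c p) = 11 \<Longrightarrow> lo1 (cL c p) = Op x \<Longrightarrow>
     applyT x (lss (cL c p)) = (s1, r1) \<Longrightarrow>
     ustep applyT c (ETau p 11)
       (setL c p ((cL c p)\<lparr>lpc := 12, ls1 := s1, lr1 := r1\<rparr>))"
| line12: "lpc (cL c p) = 12 \<Longrightarrow> l = cL c p \<Longrightarrow>
     v = (lt1 l, ls1 l, Res (lr1 l), lp1 l) \<Longrightarrow>
     b = (cS c = (lts l, lss l, lrs l, lps l)) \<Longrightarrow>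
     ustep applyT c (EL12 p v b)
       ((setL c p (l\<lparr>lpc := 4\<rparr>))\<lparr>cS := (if b then v else cS c)\<rparr>)"
| line13: "lpc (cL c p) = 13 \<Longrightarrow> l = cL c p \<Longrightarrow>
     ustep applyT c (ETau p 13)
       ((setL c p (l\<lparr>lpc := 4\<rparr>))\<lparr>cA :=
          (if cA c = (lt1 l, lo1 l, lp1 l) then (lt l, Op (lop l), HP p) else cA c)\<rparr>)"
| line14: "lpc (cL c p) = 14 \<Longrightarrow>
     ustep applyT c (ERet p (snd (cH c p))) (setL c p ((cL c p)\<lparr>lpc := 1\<rparr>))"

text \<open>Initial configurations (initial contents of the registers H_p and of the
local variables are arbitrary; every process is idle).\<close>
definition uinit :: "'q \<Rightarrow> ('p, 'op, 'q, 'r) config \<Rightarrow> bool" where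
  "uinit s0 c \<longleftrightarrow> cC c = 1 \<and> cA c = (0, NOOP, HNoop) \<and> cS c = (0, s0, Bot, HNoop)
     \<and> (\<forall>p. lpc (cL c p) = 1)"

text \<open>A (finite) execution: configurations cs!0, ..., cs!n and events es!0, ..., es!(n-1),
where es!i is the step from cs!i to cs!(i+1).\<close>
definition uexec :: "('op \<Rightarrow> 'q \<Rightarrow> 'q \<times> 'r) \<Rightarrow> 'q \<Rightarrow> ('p, 'op, 'q, 'r) config list
    \<Rightarrow> ('p, 'op, 'q, 'r) event list \<Rightarrow> bool" where
  "uexec applyT s0 cs es \<longleftrightarrow> length cs = Suc (length es) \<and> uinit s0 (cs ! 0)
     \<and> (\<forall>i < length es. ustep applyT (cs ! i) (es ! i) (cs ! Suc i))"

text \<open>The pair (t(o), h(o)) of an operation o of the execution: either the initial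
NOOP, i.e. (0, h(NOOP)), or an invocation by p whose F&I at line 2 returned t.\<close>
definition is_op :: "('p, 'op, 'q, 'r) event list \<Rightarrow> nat \<Rightarrow> 'p ptr \<Rightarrow> bool" where
  "is_op es t h \<longleftrightarrow> (t = 0 \<and> h = HNoop) \<or> (\<exists>k < length es. \<exists>p. es ! k = EFI p t \<and> h = HP p)"

end

theory Submission imports Defs begin

definition V :: "('p,'op,'q,'r) config \<Rightarrow> nat \<Rightarrow> 'p ptr \<Rightarrow> bool" where
"V c t h = (case h of HNoop \<Rightarrow> True | HP p \<Rightarrow> t < cC c \<and>
   (lpc (cL c p) = 1 \<or> lpc (cL c p) = 2 \<or> (t \<le> lt (cL c p) \<and> (lpc (cL c p) = 3 \<longrightarrow> t < lt (cL c p)))))"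

lemma V_step: "ustep applyT c e c' \<Longrightarrow> V c t h \<Longrightarrow> V c' t h"
  by (cases h; erule ustep.cases; auto simp: V_def setL_def)

definition spS :: "nat \<times> 'q \<times> 'r rv \<times> 'p ptr \<Rightarrow> nat \<times> 'p ptr" where
  "spS S = (fst S, snd (snd (snd S)))"

definition Rl :: "('p, 'op, 'q, 'r) lstate \<Rightarrow> nat \<times> 'q \<times> 'r rv \<times> 'p ptr" where
  "Rl l = (lts l, lss l, lrs l, lps l)"

lemma deref_wr: "deref (wr H y v) x = (if x = y \<and> y \<noteq> HNoop then v else deref H x)"
  by (auto simp: deref_def wr_def split: ptr.splits)

lemma deref_HNoop[simp]: "deref H HNoop = (0, Bot)"
  by (simp add: deref_def)


definition Loc :: "(nat \<times> 'p ptr) set \<Rightarrow> ('p, 'op, 'q, 'r) config \<Rightarrow> ('p, 'op, 'q, 'r) lstate \<Rightarrow> bool" where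
 "Loc Ap c l \<longleftrightarrow>
  (3 \<le> lpc l \<and> lpc l \<le> 14 \<longrightarrow> lt l < cC c) \<and>
  (6 \<le> lpc l \<and> lpc l \<le> 12 \<longrightarrow> lrs l \<noteq> NULL \<and> (lts l, lps l) \<in> insert (0, HNoop) Ap) \<and>
  (9 \<le> lpc l \<and> lpc l \<le> 12 \<longrightarrow> V c (lt1 l) (lp1 l)) \<and>
  (10 \<le> lpc l \<and> lpc l \<le> 12 \<longrightarrow> lp1 l = HNoop \<longrightarrow> (lth l, lrh l) = (0, Bot)) \<and>
  ((lpc l = 11 \<or> lpc l = 12) \<longrightarrow> (lth l, lrh l) = (lt1 l, NULL)) \<and>
  (7 \<le> lpc l \<and> lpc l \<le> 12 \<longrightarrow> Rl l = cS c \<longrightarrow> deref (cH c) (lps l) \<noteq> (lts l, NULL)) \<and>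
  (10 \<le> lpc l \<and> lpc l \<le> 12 \<longrightarrow> (lth l, lrh l) = (lt1 l, NULL) \<longrightarrow> Rl l = cS c \<longrightarrow> (lt1 l, lp1 l) \<notin> Ap)"

definition Glob :: "(nat \<times> 'p ptr) set \<Rightarrow> ('p, 'op, 'q, 'r) config \<Rightarrow> bool" where
 "Glob Ap c \<longleftrightarrow>
  fst (snd (snd (cS c))) \<noteq> NULL \<and>
  spS (cS c) \<in> insert (0, HNoop) Ap \<and>
  V c (fst (cA c)) (snd (snd (cA c))) \<and>
  (\<forall>x\<in>Ap. V c (fst x) (snd x)) \<and>
  (\<forall>x\<in>Ap. deref (cH c) (snd x) \<noteq> (fst x, NULL) \<or> spS (cS c) = x)"

definition Inv where "Inv Ap c \<longleftrightarrow> Glob Ap c \<and> (\<forall>q. Loc Ap c (cL c q))"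

lemma setL_simps[simp]: "cL (setL c p l) = (cL c)(p := l)" "cC (setL c p l) = cC c"
  "cA (setL c p l) = cA c" "cS (setL c p l) = cS c" "cH (setL c p l) = cH c"
  by (auto simp: setL_def)



lemma Loc_mono: assumes "Loc Ap c l" "cC c \<le> cC c'" "cS c' = cS c" "cH c' = cH c"
   "\<And>t h. V c t h \<Longrightarrow> V c' t h" shows "Loc Ap c' l"
proof -
  have a: "lt l < cC c \<Longrightarrow> lt l < cC c'" using assms(2) by simp
  show ?thesis
  using assms(1) unfolding Loc_def assms(3,4)
  apply (elim conjE)
  apply (intro conjI)
  using a apply blast
  apply assumption
  using assms(5) apply blast
  apply assumption+
  done
qed

lemma Glob_mono: assumes "Glob Ap c" "cS c' = cS c" "cH c' = cH c"
   "cA c' = cA c \<or> V c' (fst (cA c')) (snd (snd (cA c')))"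
   "\<And>t h. V c t h \<Longrightarrow> V c' t h" shows "Glob Ap c'"
  using assms(1) unfolding Glob_def assms(2,3)
  apply (elim conjE)
  apply (intro conjI)
  apply assumption
  apply assumption
  using assms(4,5) apply metis
  using assms(5) apply blast
  apply assumption
  done

lemma InvD: "Inv Ap c \<Longrightarrow> Glob Ap c" "Inv Ap c \<Longrightarrow> Loc Ap c (cL c q)"
  by (auto simp: Inv_def)

lemma easy: assumes "Inv Ap c" "\<And>t h. V c t h \<Longrightarrow> V c' t h" "cC c \<le> cC c'" "cS c' = cS c" "cH c' = cH c"
  "cA c' = cA c \<or> V c' (fst (cA c')) (snd (snd (cA c')))" "cL c' = (cL c)(p := l)" "Loc Ap c' l" shows "Inv Ap c'"
  unfolding Inv_def
proof (intro conjI allI)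
  show "Glob Ap c'" using Glob_mono[OF InvD(1)[OF assms(1)] assms(4,5,6,2)] .
  fix q show "Loc Ap c' (cL c' q)"
  proof (cases "q = p")
    case True then show ?thesis using assms(7,8) by simp
  next
    case False then have "cL c' q = cL c q" using assms(7) by simp
    then show ?thesis using Loc_mono[OF InvD(2)[OF assms(1)] assms(3,4,5,2)] by simp
  qed
qed

lemma easy2: assumes "Inv Ap c" "\<And>t h. V c t h \<Longrightarrow> V (setL c p l) t h" "Loc Ap (setL c p l) l"
  shows "Inv Ap (setL c p l)"
  by (rule easy[OF assms(1,2) _ _ _ _ _ assms(3)]) (simp_all add: setL_def)

lemma s1: assumes "lpc (cL c p) = 1" "Inv Ap c" 
  "\<And>t h. V c t h \<Longrightarrow> V (setL c p ((cL c p)\<lparr>lpc := 2, lop := o'\<rparr>)) t h"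
  shows "Inv Ap (setL c p ((cL c p)\<lparr>lpc := 2, lop := o'\<rparr>))"
  by (rule easy2[OF assms(2,3)]) (auto simp: Loc_def)

lemma s2: assumes "lpc (cL c p) = 2" "Inv Ap c" 
  "\<And>t h. V c t h \<Longrightarrow> V ((setL c p ((cL c p)\<lparr>lpc := 3, lt := cC c\<rparr>))\<lparr>cC := Suc (cC c)\<rparr>) t h"
  shows "Inv Ap ((setL c p ((cL c p)\<lparr>lpc := 3, lt := cC c\<rparr>))\<lparr>cC := Suc (cC c)\<rparr>)"
  by (rule easy[OF assms(2,3), where p=p and l="(cL c p)\<lparr>lpc := 3, lt := cC c\<rparr>"]) (simp_all add: Loc_def setL_def)

lemma s4: assumes "lpc (cL c p) = 4" "Inv Ap c" 
  "\<And>t h. V c t h \<Longrightarrow> V (setL c p ((cL c p)\<lparr>lpc := (if cH c p = (lt (cL c p), NULL) then 5 else 14)\<rparr>)) t h"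
  shows "Inv Ap (setL c p ((cL c p)\<lparr>lpc := (if cH c p = (lt (cL c p), NULL) then 5 else 14)\<rparr>))"
  apply (rule easy2[OF assms(2,3)])
  using InvD(2)[OF assms(2), of p] assms(1) by (auto simp: Loc_def)

lemma s5: assumes "lpc (cL c p) = 5" "Inv Ap c" "cS c = (ts, ss, rs, ps)"
  "\<And>t h. V c t h \<Longrightarrow> V (setL c p ((cL c p)\<lparr>lpc := 6, lts := ts, lss := ss, lrs := rs, lps := ps\<rparr>)) t h"
  shows "Inv Ap (setL c p ((cL c p)\<lparr>lpc := 6, lts := ts, lss := ss, lrs := rs, lps := ps\<rparr>))"
  apply (rule easy2[OF assms(2,4)])
  using InvD(2)[OF assms(2), of p] InvD(1)[OF assms(2)] assms(1,3) by (auto simp: Loc_def Glob_def spS_def)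

lemma s14: assumes "lpc (cL c p) = 14" "Inv Ap c" 
  "\<And>t h. V c t h \<Longrightarrow> V (setL c p ((cL c p)\<lparr>lpc := 1\<rparr>)) t h"
  shows "Inv Ap (setL c p ((cL c p)\<lparr>lpc := 1\<rparr>))"
  by (rule easy2[OF assms(2,3)]) (auto simp: Loc_def)

lemma s8: assumes "lpc (cL c p) = 8" "Inv Ap c" "cA c = (t1, o1, p1)"
  "\<And>t h. V c t h \<Longrightarrow> V (setL c p ((cL c p)\<lparr>lpc := 9, lt1 := t1, lo1 := o1, lp1 := p1\<rparr>)) t h"
  shows "Inv Ap (setL c p ((cL c p)\<lparr>lpc := 9, lt1 := t1, lo1 := o1, lp1 := p1\<rparr>))"
proof -
  have "V c t1 p1" using InvD(1)[OF assms(2)] assms(3) by (simp add: Glob_def)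
  then have vv: "V (setL c p ((cL c p)\<lparr>lpc := 9, lt1 := t1, lo1 := o1, lp1 := p1\<rparr>)) t1 p1" by (rule assms(4))
  show ?thesis
  apply (rule easy2[OF assms(2,4)])
  using InvD(2)[OF assms(2), of p] assms(1) vv by (auto simp: Loc_def Rl_def)
qed

lemma s10: assumes "lpc (cL c p) = 10" "Inv Ap c" "l = cL c p"
  "\<And>t h. V c t h \<Longrightarrow> V (setL c p (l\<lparr>lpc := (if (lth l, lrh l) = (lt1 l, NULL) then 11 else 13)\<rparr>)) t h"
  shows "Inv Ap (setL c p (l\<lparr>lpc := (if (lth l, lrh l) = (lt1 l, NULL) then 11 else 13)\<rparr>))"
  apply (rule easy2[OF assms(2,4)])
  using InvD(2)[OF assms(2), of p] assms(1,3,4) by (auto simp: Loc_def Rl_def)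

lemma s11: assumes "lpc (cL c p) = 11" "Inv Ap c"
  "\<And>t h. V c t h \<Longrightarrow> V (setL c p ((cL c p)\<lparr>lpc := 12, ls1 := s1, lr1 := r1\<rparr>)) t h"
  shows "Inv Ap (setL c p ((cL c p)\<lparr>lpc := 12, ls1 := s1, lr1 := r1\<rparr>))"
  apply (rule easy2[OF assms(2,3)])
  using InvD(2)[OF assms(2), of p] assms(1,3) by (auto simp: Loc_def Rl_def)

lemma deref_upd: "deref (H(p := v)) x = (if x = HP p then v else deref H x)"
  by (auto simp: deref_def split: ptr.splits)

lemma s7: assumes "lpc (cL c p) = 7" "Inv Ap c" "l = cL c p"
  "\<And>t h. V c t h \<Longrightarrow> V ((setL c p (l\<lparr>lpc := 8\<rparr>))\<lparr>cA :=
          (if fst (cA c) > lt l then (lt l, Op (lop l), HP p) else cA c)\<rparr>) t h"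
  shows "Inv Ap ((setL c p (l\<lparr>lpc := 8\<rparr>))\<lparr>cA :=
          (if fst (cA c) > lt l then (lt l, Op (lop l), HP p) else cA c)\<rparr>)"
proof -
  have L: "Loc Ap c l" using InvD(2)[OF assms(2), of p] assms(3) by simp
  have lt: "lt l < cC c" using L assms(1,3) by (simp add: Loc_def)
  have VA: "V ((setL c p (l\<lparr>lpc := 8\<rparr>))\<lparr>cA :=
          (if fst (cA c) > lt l then (lt l, Op (lop l), HP p) else cA c)\<rparr>) (lt l) (HP p)"
    using lt by (simp add: V_def setL_def)
  show ?thesis
    apply (rule easy[OF assms(2,4), where p=p and l="l\<lparr>lpc := 8\<rparr>"])
    using VA L assms(1,3,4) by (auto simp: setL_def Loc_def Rl_def)
qed

lemma s13: assumes "lpc (cL c p) = 13" "Inv Ap c" "l = cL c p"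
  "\<And>t h. V c t h \<Longrightarrow> V ((setL c p (l\<lparr>lpc := 4\<rparr>))\<lparr>cA :=
          (if cA c = (lt1 l, lo1 l, lp1 l) then (lt l, Op (lop l), HP p) else cA c)\<rparr>) t h"
  shows "Inv Ap ((setL c p (l\<lparr>lpc := 4\<rparr>))\<lparr>cA :=
          (if cA c = (lt1 l, lo1 l, lp1 l) then (lt l, Op (lop l), HP p) else cA c)\<rparr>)"
proof -
  have L: "Loc Ap c l" using InvD(2)[OF assms(2), of p] assms(3) by simp
  have lt: "lt l < cC c" using L assms(1,3) by (simp add: Loc_def)
  have VA: "V ((setL c p (l\<lparr>lpc := 4\<rparr>))\<lparr>cA :=
          (if cA c = (lt1 l, lo1 l, lp1 l) then (lt l, Op (lop l), HP p) else cA c)\<rparr>) (lt l) (HP p)"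
    using lt by (simp add: V_def setL_def)
  show ?thesis
    apply (rule easy[OF assms(2,4), where p=p and l="l\<lparr>lpc := 4\<rparr>"])
    using VA L assms(1,3,4) by (auto simp: setL_def Loc_def Rl_def)
qed

lemma Loc_H: assumes "Loc Ap c l" "cC c \<le> cC c'" "cS c' = cS c"
   "\<And>t h. V c t h \<Longrightarrow> V c' t h" "\<And>x t. deref (cH c) x \<noteq> (t, NULL) \<Longrightarrow> deref (cH c') x \<noteq> (t, NULL)"
   shows "Loc Ap c' l"
proof -
  have a: "lt l < cC c \<Longrightarrow> lt l < cC c'" using assms(2) by simp
  show ?thesis
  using assms(1) unfolding Loc_def assms(3)
  apply (elim conjE)
  apply (intro conjI)
  using a apply blast
  apply assumption
  using assms(4) apply blast
  apply assumption+
  using assms(5) apply blast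
  apply assumption
  done
qed

lemma Glob_H: assumes "Glob Ap c" "cS c' = cS c" "cA c' = cA c"
   "\<And>t h. V c t h \<Longrightarrow> V c' t h" "\<And>x t. deref (cH c) x \<noteq> (t, NULL) \<Longrightarrow> deref (cH c') x \<noteq> (t, NULL)"
   shows "Glob Ap c'"
  using assms(1) unfolding Glob_def assms(2,3)
  apply (elim conjE)
  apply (intro conjI)
  apply assumption
  apply assumption
  using assms(4) apply blast
  using assms(4) apply blast
  using assms(5) apply blast
  done

lemma s6: assumes "lpc (cL c p) = 6" "Inv Ap c" "l = cL c p"
  "\<And>t h. V c t h \<Longrightarrow> V ((setL c p (l\<lparr>lpc := 7\<rparr>))\<lparr>cH :=
          (if deref (cH c) (lps l) = (lts l, NULL)
           then wr (cH c) (lps l) (lts l, lrs l) else cH c)\<rparr>) t h"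
  shows "Inv Ap ((setL c p (l\<lparr>lpc := 7\<rparr>))\<lparr>cH :=
          (if deref (cH c) (lps l) = (lts l, NULL)
           then wr (cH c) (lps l) (lts l, lrs l) else cH c)\<rparr>)" (is "Inv Ap ?c'")
proof -
  have L: "Loc Ap c l" using InvD(2)[OF assms(2), of p] assms(3) by simp
  have nn: "lrs l \<noteq> NULL" using L assms(1,3) by (simp add: Loc_def)
  have K: "deref (cH ?c') x \<noteq> (t, NULL)" if "deref (cH c) x \<noteq> (t, NULL)" for x t
    using that nn by (auto simp: deref_wr)
  have K2: "deref (cH ?c') (lps l) \<noteq> (lts l, NULL)"
    using nn by (auto simp: deref_wr)
  show ?thesis unfolding Inv_def
  proof (intro conjI allI)
    show "Glob Ap ?c'" by (rule Glob_H[OF InvD(1)[OF assms(2)] _ _ assms(4) K]) simp_all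
    fix q show "Loc Ap ?c' (cL ?c' q)"
    proof (cases "q = p")
      case True
      then show ?thesis using L K2 assms(1,3,4) by (auto simp: Loc_def Rl_def)
    next
      case False
      then show ?thesis using Loc_H[OF InvD(2)[OF assms(2), of q] _ _ assms(4) K] by simp
    qed
  qed
qed

lemma s3: assumes "lpc (cL c p) = 3" "Inv Ap c"
  "\<And>t h. V c t h \<Longrightarrow> V ((setL c p ((cL c p)\<lparr>lpc := 4\<rparr>))\<lparr>cH := (cH c)(p := (lt (cL c p), NULL))\<rparr>) t h"
  shows "Inv Ap ((setL c p ((cL c p)\<lparr>lpc := 4\<rparr>))\<lparr>cH := (cH c)(p := (lt (cL c p), NULL))\<rparr>)" (is "Inv Ap ?c'")
proof -
  let ?l = "cL c p"
  have L: "Loc Ap c ?l" using InvD(2)[OF assms(2), of p] by simp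
  have G: "Glob Ap c" using InvD(1)[OF assms(2)] .
  have ApV: "t < lt ?l" if "(t, HP p) \<in> Ap" for t
  proof -
    have "V c t (HP p)" using G that unfolding Glob_def by fastforce
    then show ?thesis using assms(1) by (simp add: V_def)
  qed
  have K: "deref (cH ?c') x \<noteq> (t, NULL)" if "deref (cH c) x \<noteq> (t, NULL)" "(t, x) \<in> Ap" for x t
    using that ApV by (auto simp: deref_upd)
  have SAp: "spS (cS c) \<in> insert (0, HNoop) Ap" using G by (simp add: Glob_def)
  show ?thesis unfolding Inv_def
  proof (intro conjI allI)
    show "Glob Ap ?c'"
      using G unfolding Glob_def
      apply (elim conjE)
      apply (intro conjI)
      apply simp
      apply simp
      using assms(3) apply simp
      using assms(3) apply blast
      using K apply fastforce
      done
    fix q show "Loc Ap ?c' (cL ?c' q)"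
    proof (cases "q = p")
      case True
      then show ?thesis using L assms(1) by (auto simp: Loc_def)
    next
      case False
      have Lq: "Loc Ap c (cL c q)" using InvD(2)[OF assms(2)] .
      have J: "deref (cH ?c') (lps (cL c q)) \<noteq> (lts (cL c q), NULL)"
        if "7 \<le> lpc (cL c q)" "lpc (cL c q) \<le> 12" "Rl (cL c q) = cS c"
      proof -
        have d: "deref (cH c) (lps (cL c q)) \<noteq> (lts (cL c q), NULL)" using Lq that unfolding Loc_def by blast
        have "spS (cS c) = (lts (cL c q), lps (cL c q))" using that(3)[symmetric] unfolding Rl_def spS_def by simp
        then have m: "(lts (cL c q), lps (cL c q)) \<in> insert (0, HNoop) Ap" using SAp by simp
        show ?thesis
        proof (cases "lps (cL c q) = HNoop")
          case True then show ?thesis by (simp add: deref_upd)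
        next
          case False then show ?thesis using m K d by blast
        qed
      qed
      show ?thesis using False Lq J assms(3) unfolding Loc_def by (simp add: setL_def)
    qed
  qed
qed

lemma cH_setL: "cH ((setL c p l)\<lparr>cS := S\<rparr>) = cH c" by (simp add: setL_def)

lemma s12: assumes "lpc (cL c p) = 12" "Inv Ap c" "l = cL c p"
  "v = (lt1 l, ls1 l, Res (lr1 l), lp1 l)" "b = (cS c = (lts l, lss l, lrs l, lps l))"
  "\<And>t h. V c t h \<Longrightarrow> V ((setL c p (l\<lparr>lpc := 4\<rparr>))\<lparr>cS := (if b then v else cS c)\<rparr>) t h"
  shows "Inv (Ap \<union> (if b then {spS v} else {})) ((setL c p (l\<lparr>lpc := 4\<rparr>))\<lparr>cS := (if b then v else cS c)\<rparr>)"
    (is "Inv _ ?c'")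
proof -
  have L: "Loc Ap c l" using InvD(2)[OF assms(2), of p] assms(3) by simp
  have G: "Glob Ap c" using InvD(1)[OF assms(2)] .
  show ?thesis
  proof (cases b)
    case False
    then show ?thesis
      apply simp
      apply (rule easy[OF assms(2), where p=p and l="l\<lparr>lpc := 4\<rparr>"])
      using assms(6) False apply simp
      using L assms(1,3) by (auto simp: setL_def Loc_def)
  next
    case True
    let ?n = "(lt1 l, lp1 l)"
    have Sv: "cS ?c' = v" using True by simp
    have spv: "spS v = ?n" using assms(4) by (simp add: spS_def)
    have RS: "Rl l = cS c" using True assms(5) by (simp add: Rl_def)
    have hh: "(lth l, lrh l) = (lt1 l, NULL)" using L assms(1,3) by (simp add: Loc_def)
    have nAp: "?n \<notin> Ap" using L assms(1,3) hh RS unfolding Loc_def by simp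
    have nN: "lp1 l \<noteq> HNoop" using L assms(1,3) hh unfolding Loc_def by auto
    have nAp': "?n \<notin> insert (0, HNoop) Ap" using nAp nN by auto
    have Vn: "V c (lt1 l) (lp1 l)" using L assms(1,3) unfolding Loc_def by simp
    have J1p: "deref (cH c) (lps l) \<noteq> (lts l, NULL)" using L assms(1,3) RS unfolding Loc_def by simp
    have spS_old: "spS (cS c) = (lts l, lps l)" using RS[symmetric] unfolding Rl_def spS_def by simp
    have Ap': "Ap \<union> (if b then {spS v} else {}) = insert ?n Ap" using True spv by simp
    have N': "\<forall>x\<in>insert ?n Ap. deref (cH ?c') (snd x) \<noteq> (fst x, NULL) \<or> spS (cS ?c') = x"
    proof
      fix x assume x: "x \<in> insert ?n Ap"
      show "deref (cH ?c') (snd x) \<noteq> (fst x, NULL) \<or> spS (cS ?c') = x"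
      proof (cases "x = ?n")
        case True then show ?thesis using Sv spv by simp
      next
        case False
        then have "x \<in> Ap" using x by simp
        then have "deref (cH c) (snd x) \<noteq> (fst x, NULL) \<or> spS (cS c) = x" using G unfolding Glob_def by blast
        then have "deref (cH c) (snd x) \<noteq> (fst x, NULL)" using J1p spS_old by auto
        then show ?thesis by (simp add: setL_def)
      qed
    qed
    show ?thesis unfolding Ap' Inv_def
    proof (intro conjI allI)
      show "Glob (insert ?n Ap) ?c'"
        using G unfolding Glob_def
        apply (elim conjE)
        apply (intro conjI)
        using Sv assms(4) apply simp
        using Sv spv apply simp
        using assms(6) apply simp
        using assms(6) Vn apply simp
        using N' apply simp
        done
      fix q show "Loc (insert ?n Ap) ?c' (cL ?c' q)"
      proof (cases "q = p")
        case True
        then show ?thesis using L assms(1,3) by (auto simp: Loc_def)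
      next
        case False
        have Lq: "Loc Ap c (cL c q)" using InvD(2)[OF assms(2)] .
        have nR: "Rl (cL c q) \<noteq> v" if "6 \<le> lpc (cL c q)" "lpc (cL c q) \<le> 12"
        proof
          assume "Rl (cL c q) = v"
          then have "(lts (cL c q), lps (cL c q)) = ?n" using assms(4) by (simp add: Rl_def)
          moreover have "(lts (cL c q), lps (cL c q)) \<in> insert (0, HNoop) Ap" using Lq that unfolding Loc_def by simp
          ultimately show False using nAp' by simp
        qed
        show ?thesis using False Lq nR Sv assms(6) unfolding Loc_def by (auto simp: setL_def)
      qed
    qed
  qed
qed

definition newE :: "('p, 'op, 'q, 'r) event \<Rightarrow> (nat \<times> 'p ptr) set" where
  "newE e = (case e of EL12 p v b \<Rightarrow> (if b then {spS v} else {}) | _ \<Rightarrow> {})"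

lemma s9: assumes "lpc (cL c p) = 9" "Inv Ap c" "deref (cH c) (lp1 (cL c p)) = (th, rh)"
  "\<And>t h. V c t h \<Longrightarrow> V (setL c p ((cL c p)\<lparr>lpc := 10, lth := th, lrh := rh\<rparr>)) t h"
  shows "Inv Ap (setL c p ((cL c p)\<lparr>lpc := 10, lth := th, lrh := rh\<rparr>))"
proof -
  let ?l = "cL c p"
  have L: "Loc Ap c ?l" using InvD(2)[OF assms(2), of p] by simp
  have G: "Glob Ap c" using InvD(1)[OF assms(2)] .
  have M: "(lt1 ?l, lp1 ?l) \<notin> Ap" if "(th, rh) = (lt1 ?l, NULL)" "Rl ?l = cS c"
  proof
    assume a: "(lt1 ?l, lp1 ?l) \<in> Ap"
    then have "deref (cH c) (lp1 ?l) \<noteq> (lt1 ?l, NULL) \<or> spS (cS c) = (lt1 ?l, lp1 ?l)"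
      using G unfolding Glob_def by fastforce
    moreover have "deref (cH c) (lp1 ?l) = (lt1 ?l, NULL)" using assms(3) that(1) by simp
    ultimately have e: "spS (cS c) = (lt1 ?l, lp1 ?l)" by simp
    have "spS (cS c) = (lts ?l, lps ?l)" using that(2)[symmetric] unfolding Rl_def spS_def by simp
    then have "lts ?l = lt1 ?l" "lps ?l = lp1 ?l" using e by simp_all
    moreover have "deref (cH c) (lps ?l) \<noteq> (lts ?l, NULL)" using L assms(1) that(2) unfolding Loc_def by simp
    ultimately show False using assms(3) that(1) by simp
  qed
  have nop: "lp1 ?l = HNoop \<Longrightarrow> (th, rh) = (0, Bot)" using assms(3) by simp
  show ?thesis
    apply (rule easy2[OF assms(2,4)])
    using L assms(1) M nop assms(4) by (auto simp: Loc_def Rl_def)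
qed

lemma newE_simps[simp]: "newE (EInv p o') = {}" "newE (EFI p t) = {}" "newE (ETau p k) = {}"
  "newE (ERet p r) = {}" "newE (EL12 p v b) = (if b then {spS v} else {})"
  by (simp_all add: newE_def)

lemma Inv_step: assumes st: "ustep applyT c e c'" and I: "Inv Ap c" shows "Inv (Ap \<union> newE e) c'"
proof -
  have VV: "\<And>t h. V c t h \<Longrightarrow> V c' t h" using st V_step by blast
  from st show ?thesis
  proof cases
    case (line1 p o')
    then show ?thesis using s1[OF line1(3) I] VV by simp
  next
    case (line2 p)
    then show ?thesis using s2[OF line2(3) I] VV by simp
  next
    case (line3 p)
    then show ?thesis using s3[OF line3(3) I] VV by simp
  next
    case (line4 p)
    then show ?thesis using s4[OF line4(3) I] VV by simp
  next
    case (line5 p ts ss rs ps)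
    then show ?thesis using s5[OF line5(3) I line5(4)] VV by simp
  next
    case (line6 p l)
    then show ?thesis using s6[OF line6(3) I line6(4)] VV by simp
  next
    case (line7 p l)
    then show ?thesis using s7[OF line7(3) I line7(4)] VV by simp
  next
    case (line8 p t1 o1 p1)
    then show ?thesis using s8[OF line8(3) I line8(4)] VV by simp
  next
    case (line9 p th rh)
    then show ?thesis using s9[OF line9(3) I line9(4)] VV by simp
  next
    case (line10 p l)
    show ?thesis using s10[OF line10(3) I line10(4)] VV line10(1,2) by (simp add: HOL.induct_conj_def)
  next
    case (line11 p x s1 r1)
    then show ?thesis using s11[OF line11(3) I] VV by simp
  next
    case (line12 p l v b)
    have c'eq: "c' = (setL c p (l\<lparr>lpc:=4\<rparr>))\<lparr>cS := if b then v else cS c\<rparr>" using line12(2,4,5,6) by simp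
    have ee: "e = EL12 p v b" using line12(1,4,5,6) by simp
    have VV': "\<And>t h. V c t h \<Longrightarrow> V ((setL c p (l\<lparr>lpc:=4\<rparr>))\<lparr>cS := if b then v else cS c\<rparr>) t h"
      using VV unfolding c'eq .
    show ?thesis unfolding c'eq ee newE_simps by (rule s12[OF line12(3) I line12(4,5,6) VV'])
  next
    case (line13 p l)
    then show ?thesis using s13[OF line13(3) I line13(4)] VV by simp
  next
    case (line14 p)
    then show ?thesis using s14[OF line14(3) I] VV by simp
  qed
qed

primrec ApS :: "('p, 'op, 'q, 'r) event list \<Rightarrow> nat \<Rightarrow> (nat \<times> 'p ptr) set" where
  "ApS es 0 = {}"
| "ApS es (Suc n) = ApS es n \<union> newE (es ! n)"

lemma ApS_mem: "k < n \<Longrightarrow> es ! k = EL12 p (t, s, r, h) True \<Longrightarrow> (t, h) \<in> ApS es n"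
proof (induction n)
  case 0 then show ?case by simp
next
  case (Suc n)
  show ?case
  proof (cases "k = n")
    case True then show ?thesis using Suc.prems by (simp add: spS_def)
  next
    case False then show ?thesis using Suc by simp
  qed
qed

lemma Inv_init: "uinit s0 c \<Longrightarrow> Inv {} c"
  unfolding uinit_def Inv_def Glob_def Loc_def by (simp add: spS_def V_def)

lemma Inv_all: assumes "uexec applyT s0 cs es" shows "n \<le> length es \<Longrightarrow> Inv (ApS es n) (cs ! n)"
proof (induction n)
  case 0
  have "uinit s0 (cs ! 0)" using assms unfolding uexec_def by simp
  then have "Inv {} (cs ! 0)" by (rule Inv_init)
  then show ?case by simp
next
  case (Suc n)
  then have "ustep applyT (cs ! n) (es ! n) (cs ! Suc n)" using assms unfolding uexec_def by simp
  then show ?case using Inv_step Suc by simp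
qed

theorem mainTheorem12:
  fixes delta :: "('q \<times> 'op \<times> 'q \<times> 'r) set" and s0 :: 'q
    and applyT :: "'op \<Rightarrow> 'q \<Rightarrow> 'q \<times> 'r"
    and cs :: "('p, 'op, 'q, 'r) config list" and es :: "('p, 'op, 'q, 'r) event list"
  assumes "\<forall>o' s. (s, o', fst (applyT o' s), snd (applyT o' s)) \<in> delta"
    and "uexec applyT s0 cs es"
    and "is_op es t h"
    and "i < j" and "j < length es"
    and "es ! i = EL12 p (t, s, r, h) True"
    and "es ! j = EL12 p' (t, s', r', h) b"
  shows "\<not> b"
proof
  assume bb: b
  have I: "Inv (ApS es j) (cs ! j)" using Inv_all[OF assms(2)] assms(5) by simp
  have mem: "(t, h) \<in> ApS es j" using ApS_mem[OF assms(4,6)] .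
  have st: "ustep applyT (cs ! j) (EL12 p' (t, s', r', h) b) (cs ! Suc j)"
    using assms(2,5,7) unfolding uexec_def by metis
  from st show False
  proof cases
    case (line12 l)
    have L: "Loc (ApS es j) (cs ! j) l" using InvD(2)[OF I, of p'] line12 by simp
    have "(lth l, lrh l) = (lt1 l, NULL)" using L line12 unfolding Loc_def by simp
    moreover have "Rl l = cS (cs ! j)" using line12 bb by (simp add: Rl_def)
    ultimately have "(lt1 l, lp1 l) \<notin> ApS es j" using L line12 unfolding Loc_def by simp
    moreover have "t = lt1 l" "h = lp1 l" using line12 by simp_all
    ultimately show False using mem by simp
  qed
qed
end
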